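(* Consider uplink two-user NOMA with users $U_1,U_2$ at fixed distances $0<d_1<d_2$ from the base station (BS). Let $X_k=|h_k|^2d_k^{-\alpha}$ be the channel gains, with $\alpha>0$ and $h_1,h_2$ i.i.d. $\mathcal{CN}(0,1)$, independent of the BS's distance estimates $\hat d_1,\hat d_2$ (defined in the context), and let $P_e^1=\Pr\{\hat d_1>\hat d_2\}$. The user $N$ with the smaller estimated distance transmits with SNR $\rho_1>0$ and the other user $F$ with SNR $\rho_2>0$; the BS first decodes $N$'s signal treating $F$'s as noise, then decodes $F$'s signal after cancellation. Let $\epsilon_0=2^{R_0^*}-1>0$ for a target rate $R_0^*>0$ and define the common outage probability $$P_{cop}=1-\Pr\left\{\frac{\rho_1X_N}{\rho_2X_F+1}>\epsilon_0,\ \rho_2X_F>\epsilon_0\right\},$$ where $X_N,X_F$ are the channel gains of $N$ and $F$. Then $$P_{cop}=1-(1-P_e^1)\frac{\lambda_2}{\lambda_2+k\lambda_1}e^{-\lambda_1C-(\lambda_2+k\lambda_1)B}-P_e^1\frac{\lambda_1}{\lambda_1+k\lambda_2}e^{-\lambda_2C-(\lambda_1+k\lambda_2)B},$$ where $B=\frac{\epsilon_0}{\rho_2}$, $C=\frac{\epsilon_0}{\rho_1}$, $k=\frac{\epsilon_0\rho_2}{\rho_1}$ and $\lambda_k=d_k^\alpha$.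
   Context: Position model: user $U_k$ is at fixed position $(x_k,y_k)$ with $d_k=\sqrt{x_k^2+y_k^2}$; the BS's estimates are $\hat x_k\sim\mathcal N(x_k,\sigma_{ob}^2)$, $\hat y_k\sim\mathcal N(y_k,\sigma_{ob}^2)$, all mutually independent, and $\hat d_k=\sqrt{\hat x_k^2+\hat y_k^2}$. Transmit SNRs are assigned by estimated order: the estimated-nearer user uses $\rho_1$ and the estimated-farther user uses $\rho_2$. *)

theory Defs
  imports "HOL-Probability.Probability"
begin

definition dhat :: "(nat \<Rightarrow> 'a \<Rightarrow> real) \<Rightarrow> (nat \<Rightarrow> 'a \<Rightarrow> real) \<Rightarrow> nat \<Rightarrow> 'a \<Rightarrow> real" where
  "dhat xe ye k \<omega> = sqrt ((xe k \<omega>)\<^sup>2 + (ye k \<omega>)\<^sup>2)"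

definition gain :: "(nat \<Rightarrow> 'a \<Rightarrow> real) \<Rightarrow> (nat \<Rightarrow> 'a \<Rightarrow> real) \<Rightarrow> (nat \<Rightarrow> real) \<Rightarrow> real \<Rightarrow> nat \<Rightarrow> 'a \<Rightarrow> real" where
  "gain hr hi d \<alpha> k \<omega> = ((hr k \<omega>)\<^sup>2 + (hi k \<omega>)\<^sup>2) * d k powr (-\<alpha>)"

text \<open>Index of the estimated-nearer user N and the estimated-farther user F
  (ties, a null event, are resolved in favour of U1 being N).\<close>
definition nearU :: "(nat \<Rightarrow> 'a \<Rightarrow> real) \<Rightarrow> (nat \<Rightarrow> 'a \<Rightarrow> real) \<Rightarrow> 'a \<Rightarrow> nat" where
  "nearU xe ye \<omega> = (if dhat xe ye 1 \<omega> \<le> dhat xe ye 2 \<omega> then 1 else 2)"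

definition farU :: "(nat \<Rightarrow> 'a \<Rightarrow> real) \<Rightarrow> (nat \<Rightarrow> 'a \<Rightarrow> real) \<Rightarrow> 'a \<Rightarrow> nat" where
  "farU xe ye \<omega> = (if dhat xe ye 1 \<omega> \<le> dhat xe ye 2 \<omega> then 2 else 1)"

text \<open>The eight underlying real random variables, indexed by (component, user):
  component 0 = Re h_k, 1 = Im h_k, 2 = xhat_k, 3 = yhat_k.\<close>
definition rvs :: "(nat \<Rightarrow> 'a \<Rightarrow> real) \<Rightarrow> (nat \<Rightarrow> 'a \<Rightarrow> real) \<Rightarrow> (nat \<Rightarrow> 'a \<Rightarrow> real) \<Rightarrow> (nat \<Rightarrow> 'a \<Rightarrow> real) \<Rightarrow> nat \<times> nat \<Rightarrow> 'a \<Rightarrow> real" where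
  "rvs hr hi xe ye = (\<lambda>(c, k). if c = 0 then hr k else if c = 1 then hi k else if c = 2 then xe k else ye k)"

end

theory Submission
  imports Defs "HOL-Real_Asymp.Real_Asymp"
begin

lemma nn_integral_even:
  fixes f :: "real \<Rightarrow> ennreal"
  assumes [measurable]: "f \<in> borel_measurable borel" and ev: "\<And>x. f (-x) = f x"
  shows "(\<integral>\<^sup>+x. f x \<partial>lborel) = 2 * (\<integral>\<^sup>+x. f x * indicator {0<..} x \<partial>lborel)"
proof -
  have "(\<integral>\<^sup>+x. f x \<partial>lborel) = (\<integral>\<^sup>+x. f x * indicator {0<..} x + f x * indicator {..<0} x \<partial>lborel)"
    by (intro nn_integral_cong_AE eventually_mono[OF AE_lborel_singleton[of 0]])
       (auto split: split_indicator)
  also have "\<dots> = (\<integral>\<^sup>+x. f x * indicator {0<..} x \<partial>lborel) + (\<integral>\<^sup>+x. f x * indicator {..<0} x \<partial>lborel)"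
    by (rule nn_integral_add) auto
  also have "(\<integral>\<^sup>+x. f x * indicator {..<0} x \<partial>lborel) = (\<integral>\<^sup>+x. f (0 + (-1) * x) * indicator {..<0} (0 + (-1) * x) \<partial>lborel)"
    by (subst nn_integral_real_affine[where c="-1" and t=0]) auto
  also have "\<dots> = (\<integral>\<^sup>+x. f x * indicator {0<..} x \<partial>lborel)"
    by (intro nn_integral_cong) (auto simp: ev split: split_indicator)
  finally show ?thesis
    by (metis mult_2)
qed

lemma inner_u:
  fixes s a :: real assumes a: "0 \<le> a"
  shows "(\<integral>\<^sup>+u. ennreal (u * exp (- (u\<^sup>2 * (1 + s\<^sup>2))) / pi * indicator {..a} (u\<^sup>2 * (1 + s\<^sup>2))) * indicator {0<..} u \<partial>lborel)
     = ennreal ((1 - exp (-a)) / (2 * pi * (1 + s\<^sup>2)))"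
proof -
  define c where "c = 1 + s\<^sup>2"
  have c: "c > 0" unfolding c_def by (simp add: add_pos_nonneg)
  define r where "r = sqrt (a / c)"
  have r: "r \<ge> 0" "r\<^sup>2 = a / c" using a c by (auto simp: r_def)
  have "(\<integral>\<^sup>+u. ennreal (u * exp (- (u\<^sup>2 * c)) / pi * indicator {..a} (u\<^sup>2 * c)) * indicator {0<..} u \<partial>lborel)
     = (\<integral>\<^sup>+u. ennreal (u * exp (- (u\<^sup>2 * c)) / pi) * indicator {0..r} u \<partial>lborel)"
  proof (intro nn_integral_cong)
    fix u :: real
    have "u > 0 \<Longrightarrow> u\<^sup>2 * c \<le> a \<longleftrightarrow> u \<le> r"
    proof -
      assume u: "u > 0"
      have ar: "a = r\<^sup>2 * c" using c r by (simp add: field_simps)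
      have "u\<^sup>2 * c \<le> a \<longleftrightarrow> u\<^sup>2 \<le> r\<^sup>2" unfolding ar using c by simp
      also have "\<dots> \<longleftrightarrow> u \<le> r" using u r by (meson less_imp_le power_mono power2_le_imp_le)
      finally show ?thesis .
    qed
    then show "ennreal (u * exp (- (u\<^sup>2 * c)) / pi * indicator {..a} (u\<^sup>2 * c)) * indicator {0<..} u
      = ennreal (u * exp (- (u\<^sup>2 * c)) / pi) * indicator {0..r} u"
      by (cases "u > 0"; cases "u = 0") (auto split: split_indicator)
  qed
  also have "\<dots> = ennreal (- exp (- (r\<^sup>2 * c)) / (2 * c * pi) - (- exp (- (0\<^sup>2 * c)) / (2 * c * pi)))"
    by (rule nn_integral_FTC_Icc[where F="\<lambda>u. - exp (- (u\<^sup>2 * c)) / (2 * c * pi)"])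
       (use c r in \<open>auto intro!: derivative_eq_intros simp: field_simps\<close>)
  also have "- exp (- (r\<^sup>2 * c)) / (2 * c * pi) - (- exp (- (0\<^sup>2 * c)) / (2 * c * pi)) = (1 - exp (-a)) / (2 * pi * c)"
    using c r by (simp add: field_simps)
  finally show ?thesis unfolding c_def .
qed

lemma arctan_int:
  fixes K :: real assumes K: "0 \<le> K"
  shows "(\<integral>\<^sup>+s. ennreal (K / (1 + s\<^sup>2)) * indicator {0<..} s \<partial>lborel) = ennreal (K * pi / 2)"
proof -
  have "(\<integral>\<^sup>+s. ennreal (K / (1 + s\<^sup>2)) * indicator {0<..} s \<partial>lborel)
      = (\<integral>\<^sup>+s. ennreal (K / (1 + s\<^sup>2)) * indicator {0..} s \<partial>lborel)"
    by (intro nn_integral_cong_AE eventually_mono[OF AE_lborel_singleton[of 0]])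
       (auto split: split_indicator)
  also have "\<dots> = ennreal (K * (pi / 2) - K * arctan 0)"
  proof (rule nn_integral_FTC_atLeast[where F="\<lambda>s. K * arctan s"])
    show "((\<lambda>s. K * arctan s) \<longlongrightarrow> K * (pi / 2)) at_top"
      by (intro tendsto_intros) (simp_all add: tendsto_arctan_at_top)
  qed (use K in \<open>auto intro!: derivative_eq_intros simp: add_nonneg_eq_0_iff field_simps power2_eq_square\<close>)
  finally show ?thesis by simp
qed


lemma core:
  fixes a :: real assumes a: "0 \<le> a"
  shows "(\<integral>\<^sup>+u. \<integral>\<^sup>+v. ennreal (exp (-(u\<^sup>2+v\<^sup>2)) / pi * indicator {..a} (u\<^sup>2+v\<^sup>2)) \<partial>lborel \<partial>lborel)
    = ennreal (1 - exp (-a))"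
proof -
  define g where "g u v = ennreal (exp (-(u\<^sup>2+v\<^sup>2)) / pi * indicator {..a} (u\<^sup>2+v\<^sup>2))" for u v :: real
  define Q where "Q u = (\<integral>\<^sup>+v. g u v * indicator {0<..} v \<partial>lborel)" for u
  define F where "F u s = ennreal (u * exp (- (u\<^sup>2 * (1 + s\<^sup>2))) / pi * indicator {..a} (u\<^sup>2 * (1 + s\<^sup>2))) * indicator {0<..} s" for u s :: real
  have gm'[measurable]: "g u \<in> borel_measurable borel" for u unfolding g_def by measurable
  have Qm[measurable]: "Q \<in> borel_measurable borel" unfolding Q_def g_def by measurable
  have Fm[measurable]: "case_prod F \<in> borel_measurable (lborel \<Otimes>\<^sub>M lborel)" unfolding F_def by measurable
  have 1: "(\<integral>\<^sup>+v. g u v \<partial>lborel) = 2 * Q u" for u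
    unfolding Q_def by (rule nn_integral_even) (auto simp: g_def)
  have 2: "(\<integral>\<^sup>+u. Q u \<partial>lborel) = 2 * (\<integral>\<^sup>+u. Q u * indicator {0<..} u \<partial>lborel)"
    by (rule nn_integral_even) (auto simp: Q_def g_def)
  have 3: "Q u = (\<integral>\<^sup>+s. F u s \<partial>lborel)" if u: "u > 0" for u
  proof -
    have "Q u = ennreal \<bar>u\<bar> * (\<integral>\<^sup>+s. g u (0 + u * s) * indicator {0<..} (0 + u * s) \<partial>lborel)"
      unfolding Q_def using u by (intro nn_integral_real_affine) auto
    also have "\<dots> = (\<integral>\<^sup>+s. ennreal \<bar>u\<bar> * (g u (0 + u * s) * indicator {0<..} (0 + u * s)) \<partial>lborel)"
      by (rule nn_integral_cmult[symmetric]) auto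
    also have "\<dots> = (\<integral>\<^sup>+s. F u s \<partial>lborel)"
    proof (intro nn_integral_cong)
      fix s :: real
      have e: "u\<^sup>2 + (u * s)\<^sup>2 = u\<^sup>2 * (1 + s\<^sup>2)" by (simp add: algebra_simps power_mult_distrib)
      have p: "0 < u * s \<longleftrightarrow> 0 < s" using u by (simp add: zero_less_mult_iff)
      show "ennreal \<bar>u\<bar> * (g u (0 + u * s) * indicator {0<..} (0 + u * s)) = F u s"
        unfolding g_def F_def e using u p
        by (auto simp: e ennreal_mult[symmetric] split: split_indicator)
    qed
    finally show ?thesis .
  qed
  have 4: "(\<integral>\<^sup>+u. Q u * indicator {0<..} u \<partial>lborel) = (\<integral>\<^sup>+u. \<integral>\<^sup>+s. F u s * indicator {0<..} u \<partial>lborel \<partial>lborel)"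
  proof (intro nn_integral_cong)
    fix u :: real
    show "Q u * indicator {0<..} u = (\<integral>\<^sup>+s. F u s * indicator {0<..} u \<partial>lborel)"
      using 3[of u] by (cases "u > 0") (auto simp: nn_integral_multc)
  qed
  also have "\<dots> = (\<integral>\<^sup>+s. \<integral>\<^sup>+u. F u s * indicator {0<..} u \<partial>lborel \<partial>lborel)"
    by (rule lborel_pair.Fubini'[symmetric]) measurable
  also have "\<dots> = (\<integral>\<^sup>+s. ennreal ((1 - exp (-a)) / (2 * pi) / (1 + s\<^sup>2)) * indicator {0<..} s \<partial>lborel)"
  proof (intro nn_integral_cong)
    fix s :: real
    have "(\<integral>\<^sup>+u. F u s * indicator {0<..} u \<partial>lborel) =
      (\<integral>\<^sup>+u. ennreal (u * exp (- (u\<^sup>2 * (1 + s\<^sup>2))) / pi * indicator {..a} (u\<^sup>2 * (1 + s\<^sup>2))) * indicator {0<..} u \<partial>lborel) * indicator {0<..} s"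
      unfolding F_def by (subst nn_integral_multc[symmetric]) (auto intro!: nn_integral_cong simp: mult_ac)
    also have "\<dots> = ennreal ((1 - exp (-a)) / (2 * pi) / (1 + s\<^sup>2)) * indicator {0<..} s"
      using inner_u[OF a, of s] by (simp add: field_simps)
    finally show "(\<integral>\<^sup>+u. F u s * indicator {0<..} u \<partial>lborel) = ennreal ((1 - exp (-a)) / (2 * pi) / (1 + s\<^sup>2)) * indicator {0<..} s" .
  qed
  also have "\<dots> = ennreal ((1 - exp (-a)) / (2 * pi) * pi / 2)"
    by (rule arctan_int) (use a in auto)
  finally have 5: "(\<integral>\<^sup>+u. Q u * indicator {0<..} u \<partial>lborel) = ennreal ((1 - exp (-a)) / 4)"
    by simp
  have "(\<integral>\<^sup>+u. \<integral>\<^sup>+v. g u v \<partial>lborel \<partial>lborel) = (\<integral>\<^sup>+u. 2 * Q u \<partial>lborel)"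
    by (simp add: 1)
  also have "\<dots> = 2 * (\<integral>\<^sup>+u. Q u \<partial>lborel)"
    by (rule nn_integral_cmult) measurable
  also have "\<dots> = ennreal (1 - exp (-a))"
  proof -
    have "(2::ennreal) * (2 * ennreal ((1 - exp (-a)) / 4)) = ennreal 4 * ennreal ((1 - exp (-a)) / 4)"
      by (simp add: mult.assoc[symmetric] ennreal_numeral[symmetric] ennreal_mult[symmetric] del: ennreal_numeral)
    also have "\<dots> = ennreal (1 - exp (-a))"
      by (subst ennreal_mult[symmetric]) (use a in auto)
    finally show ?thesis unfolding 2 5 .
  qed
  finally show ?thesis unfolding g_def .
qed


lemma nd_half: "normal_density 0 (sqrt (1/2)) x = exp (- x\<^sup>2) / sqrt pi"
  by (simp add: normal_density_def)

lemma (in prob_space) chi2: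
  assumes ind: "indep_var lborel U lborel V"
    and dU: "distributed M lborel U (normal_density 0 (sqrt (1/2)))"
    and dV: "distributed M lborel V (normal_density 0 (sqrt (1/2)))"
  shows "distributed M lborel (\<lambda>\<omega>. (U \<omega>)\<^sup>2 + (V \<omega>)\<^sup>2) (exponential_density 1)"
proof -
  have [measurable]: "U \<in> borel_measurable M" "V \<in> borel_measurable M"
    using distributed_measurable[OF dU] distributed_measurable[OF dV] by auto
  have J: "distributed M (lborel \<Otimes>\<^sub>M lborel) (\<lambda>x. (U x, V x))
      (\<lambda>(x, y). ennreal (normal_density 0 (sqrt (1/2)) x) * ennreal (normal_density 0 (sqrt (1/2)) y))"
    by (rule distributed_joint_indep[OF _ _ dU dV ind]) (auto intro: lborel.sigma_finite_measure_axioms)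
  show ?thesis
  proof (rule exponential_distributedI)
    show "(\<lambda>\<omega>. (U \<omega>)\<^sup>2 + (V \<omega>)\<^sup>2) \<in> borel_measurable M" by measurable
    fix a :: real assume a: "0 \<le> a"
    define A where "A = {p :: real \<times> real. (fst p)\<^sup>2 + (snd p)\<^sup>2 \<le> a}"
    have "A = {p \<in> space (lborel \<Otimes>\<^sub>M lborel). (fst p)\<^sup>2 + (snd p)\<^sup>2 \<le> a}"
      by (simp add: A_def space_pair_measure)
    also have "\<dots> \<in> sets (lborel \<Otimes>\<^sub>M lborel)" by measurable
    finally have A: "A \<in> sets (lborel \<Otimes>\<^sub>M lborel)" .
    have "emeasure M {x \<in> space M. (U x)\<^sup>2 + (V x)\<^sup>2 \<le> a} = emeasure M ((\<lambda>x. (U x, V x)) -` A \<inter> space M)"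
      by (intro arg_cong[where f="emeasure M"]) (auto simp: A_def)
    also have "\<dots> = (\<integral>\<^sup>+p. (\<lambda>(x, y). ennreal (normal_density 0 (sqrt (1/2)) x) * ennreal (normal_density 0 (sqrt (1/2)) y)) p * indicator A p \<partial>(lborel \<Otimes>\<^sub>M lborel))"
      by (rule distributed_emeasure[OF J A])
    also have "\<dots> = (\<integral>\<^sup>+u. \<integral>\<^sup>+v. (\<lambda>(x, y). ennreal (normal_density 0 (sqrt (1/2)) x) * ennreal (normal_density 0 (sqrt (1/2)) y)) (u, v) * indicator A (u, v) \<partial>lborel \<partial>lborel)"
      using lborel.nn_integral_fst[where f="\<lambda>p. (\<lambda>(x, y). ennreal (normal_density 0 (sqrt (1/2)) x) * ennreal (normal_density 0 (sqrt (1/2)) y)) p * indicator A p"]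
        A by simp
    also have "\<dots> = (\<integral>\<^sup>+u. \<integral>\<^sup>+v. ennreal (exp (-(u\<^sup>2+v\<^sup>2)) / pi * indicator {..a} (u\<^sup>2+v\<^sup>2)) \<partial>lborel \<partial>lborel)"
    proof -
      have e: "exp (- u\<^sup>2) / sqrt pi * (exp (- v\<^sup>2) / sqrt pi) = exp (-(u\<^sup>2+v\<^sup>2)) / pi" for u v :: real
        by (simp add: exp_add[symmetric] field_simps)
      show ?thesis
        by (intro nn_integral_cong) (auto simp: e nd_half A_def ennreal_mult[symmetric] exp_diff exp_minus field_simps split: split_indicator)
    qed
    also have "\<dots> = ennreal (1 - exp (-a))" by (rule core[OF a])
    finally have "emeasure M {x \<in> space M. (U x)\<^sup>2 + (V x)\<^sup>2 \<le> a} = ennreal (1 - exp (- a))" .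
    then show "emeasure M {x \<in> space M. (U x)\<^sup>2 + (V x)\<^sup>2 \<le> a} = 1 - ennreal (exp (- a * 1))"
      by (simp add: ennreal_minus ennreal_1[symmetric] del: ennreal_1)
  qed simp
qed


lemma exp_tail:
  fixes l t :: real assumes l: "0 < l" and t: "0 \<le> t"
  shows "(\<integral>\<^sup>+x. ennreal (exponential_density l x) * indicator {t<..} x \<partial>lborel) = ennreal (exp (- t * l))"
proof -
  have "(\<integral>\<^sup>+x. ennreal (exponential_density l x) * indicator {t<..} x \<partial>lborel)
      = (\<integral>\<^sup>+x. ennreal (l * exp (- x * l)) * indicator {t..} x \<partial>lborel)"
    by (intro nn_integral_cong_AE eventually_mono[OF AE_lborel_singleton[of t]])
       (use t in \<open>auto simp: exponential_density_def split: split_indicator\<close>)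
  also have "\<dots> = ennreal (0 - (- exp (- t * l)))"
  proof (rule nn_integral_FTC_atLeast[where F="\<lambda>x. - exp (- x * l)"])
    show "((\<lambda>x. - exp (- x * l)) \<longlongrightarrow> 0) at_top"
    proof -
      have "((\<lambda>x. exp (- x * l)) \<longlongrightarrow> 0) at_top"
        by (rule filterlim_compose[OF exp_at_bot]) (use l in \<open>real_asymp\<close>)
      from tendsto_minus[OF this] show ?thesis by simp
    qed
  qed (use l in \<open>auto intro!: derivative_eq_intros simp: field_simps\<close>)
  finally show ?thesis by simp
qed


lemma (in prob_space) twoexp:
  assumes ind: "indep_var lborel Xb lborel Xa"
    and dA: "distributed M lborel Xa (exponential_density la)"
    and dB: "distributed M lborel Xb (exponential_density lb)"
    and la: "0 < la" and lb: "0 < lb" and e: "0 < e" and r1: "0 < \<rho>1" and r2: "0 < \<rho>2"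
  shows "prob {\<omega> \<in> space M. \<rho>1 * Xa \<omega> / (\<rho>2 * Xb \<omega> + 1) > e \<and> \<rho>2 * Xb \<omega> > e}
    = lb / (lb + (e * \<rho>2 / \<rho>1) * la) * exp (- la * (e / \<rho>1) - (lb + (e * \<rho>2 / \<rho>1) * la) * (e / \<rho>2))"
proof -
  define B where "B = e / \<rho>2"
  define C where "C = e / \<rho>1"
  define kk where "kk = e * \<rho>2 / \<rho>1"
  define mu where "mu = lb + kk * la"
  have B: "0 < B" and C: "0 < C" and kk: "0 < kk" and mu: "0 < mu"
    using e r1 r2 la lb by (auto simp: B_def C_def kk_def mu_def add_pos_pos)
  have [measurable]: "Xa \<in> borel_measurable M" "Xb \<in> borel_measurable M"
    using distributed_measurable[OF dA] distributed_measurable[OF dB] by auto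
  have J: "distributed M (lborel \<Otimes>\<^sub>M lborel) (\<lambda>x. (Xb x, Xa x))
      (\<lambda>(y, x). ennreal (exponential_density lb y) * ennreal (exponential_density la x))"
    by (rule distributed_joint_indep[OF _ _ dB dA ind]) (auto intro: lborel.sigma_finite_measure_axioms)
  define A where "A = {p :: real \<times> real. B < fst p \<and> C + kk * fst p < snd p}"
  have "A = {p \<in> space (lborel \<Otimes>\<^sub>M lborel). B < fst p \<and> C + kk * fst p < snd p}"
    by (simp add: A_def space_pair_measure)
  also have "\<dots> \<in> sets (lborel \<Otimes>\<^sub>M lborel)" by measurable
  finally have A: "A \<in> sets (lborel \<Otimes>\<^sub>M lborel)" .
  have ev: "{\<omega> \<in> space M. \<rho>1 * Xa \<omega> / (\<rho>2 * Xb \<omega> + 1) > e \<and> \<rho>2 * Xb \<omega> > e} = (\<lambda>x. (Xb x, Xa x)) -` A \<inter> space M"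
  proof (intro set_eqI iffI)
    fix \<omega> assume "\<omega> \<in> {\<omega> \<in> space M. \<rho>1 * Xa \<omega> / (\<rho>2 * Xb \<omega> + 1) > e \<and> \<rho>2 * Xb \<omega> > e}"
    then have w: "\<omega> \<in> space M" "\<rho>1 * Xa \<omega> / (\<rho>2 * Xb \<omega> + 1) > e" "\<rho>2 * Xb \<omega> > e" by auto
    have p: "\<rho>2 * Xb \<omega> + 1 > 0" using w e by linarith
    from w(2) p have "\<rho>1 * Xa \<omega> > e * (\<rho>2 * Xb \<omega> + 1)" by (simp add: field_simps)
    then have "Xa \<omega> > C + kk * Xb \<omega>" using r1 by (simp add: C_def kk_def field_simps)
    moreover have "B < Xb \<omega>" using w(3) r2 by (simp add: B_def field_simps)
    ultimately show "\<omega> \<in> (\<lambda>x. (Xb x, Xa x)) -` A \<inter> space M" using w by (auto simp: A_def)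
  next
    fix \<omega> assume "\<omega> \<in> (\<lambda>x. (Xb x, Xa x)) -` A \<inter> space M"
    then have w: "\<omega> \<in> space M" "B < Xb \<omega>" "C + kk * Xb \<omega> < Xa \<omega>" by (auto simp: A_def)
    have w3: "\<rho>2 * Xb \<omega> > e" using w(2) r2 by (simp add: B_def field_simps)
    have p: "\<rho>2 * Xb \<omega> + 1 > 0" using w3 e by linarith
    have "\<rho>1 * Xa \<omega> > e * (\<rho>2 * Xb \<omega> + 1)" using w(3) r1 by (simp add: C_def kk_def field_simps)
    then have "\<rho>1 * Xa \<omega> / (\<rho>2 * Xb \<omega> + 1) > e" using p by (simp add: field_simps)
    then show "\<omega> \<in> {\<omega> \<in> space M. \<rho>1 * Xa \<omega> / (\<rho>2 * Xb \<omega> + 1) > e \<and> \<rho>2 * Xb \<omega> > e}" using w w3 by auto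
  qed
  have "emeasure M ((\<lambda>x. (Xb x, Xa x)) -` A \<inter> space M)
     = (\<integral>\<^sup>+p. (\<lambda>(y, x). ennreal (exponential_density lb y) * ennreal (exponential_density la x)) p * indicator A p \<partial>(lborel \<Otimes>\<^sub>M lborel))"
    by (rule distributed_emeasure[OF J A])
  also have "\<dots> = (\<integral>\<^sup>+y. \<integral>\<^sup>+x. (\<lambda>(y, x). ennreal (exponential_density lb y) * ennreal (exponential_density la x)) (y, x) * indicator A (y, x) \<partial>lborel \<partial>lborel)"
    using lborel.nn_integral_fst[where f="\<lambda>p. (\<lambda>(y, x). ennreal (exponential_density lb y) * ennreal (exponential_density la x)) p * indicator A p"]
      A by simp
  also have "\<dots> = (\<integral>\<^sup>+y. ennreal (lb / mu * exp (- la * C)) * (ennreal (exponential_density mu y) * indicator {B<..} y) \<partial>lborel)"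
  proof (intro nn_integral_cong)
    fix y :: real
    have "(\<integral>\<^sup>+x. (\<lambda>(y, x). ennreal (exponential_density lb y) * ennreal (exponential_density la x)) (y, x) * indicator A (y, x) \<partial>lborel)
      = (\<integral>\<^sup>+x. (ennreal (exponential_density lb y) * indicator {B<..} y) * (ennreal (exponential_density la x) * indicator {C + kk * y<..} x) \<partial>lborel)"
      by (intro nn_integral_cong) (auto simp: A_def split: split_indicator)
    also have "\<dots> = (ennreal (exponential_density lb y) * indicator {B<..} y) * (\<integral>\<^sup>+x. ennreal (exponential_density la x) * indicator {C + kk * y<..} x \<partial>lborel)"
      by (rule nn_integral_cmult) measurable
    also have "\<dots> = ennreal (lb / mu * exp (- la * C)) * (ennreal (exponential_density mu y) * indicator {B<..} y)"
    proof (cases "B < y")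
      case True
      then have y: "0 \<le> y" "0 \<le> C + kk * y" using B C kk by (auto intro: add_nonneg_nonneg)
      have "lb * exp (- y * lb) * exp (- (C + kk * y) * la) = lb / mu * exp (- la * C) * (mu * exp (- y * mu))"
        using mu by (simp add: mu_def exp_add[symmetric] field_simps)
      moreover note T = exp_tail[OF la y(2)]
      ultimately show ?thesis using True y la lb mu
        by (simp only: T) (simp add: exponential_density_def ennreal_mult[symmetric])
    qed simp
    finally show "(\<integral>\<^sup>+x. (\<lambda>(y, x). ennreal (exponential_density lb y) * ennreal (exponential_density la x)) (y, x) * indicator A (y, x) \<partial>lborel)
      = ennreal (lb / mu * exp (- la * C)) * (ennreal (exponential_density mu y) * indicator {B<..} y)" .
  qed
  also have "\<dots> = ennreal (lb / mu * exp (- la * C)) * (\<integral>\<^sup>+y. ennreal (exponential_density mu y) * indicator {B<..} y \<partial>lborel)"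
    by (rule nn_integral_cmult) measurable
  also have "\<dots> = ennreal (lb / mu * exp (- la * C) * exp (- B * mu))"
    using exp_tail[OF mu, of B] B la lb mu by (simp add: ennreal_mult[symmetric])
  finally have "emeasure M ((\<lambda>x. (Xb x, Xa x)) -` A \<inter> space M) = ennreal (lb / mu * exp (- la * C) * exp (- B * mu))" .
  then have "prob ((\<lambda>x. (Xb x, Xa x)) -` A \<inter> space M) = lb / mu * exp (- la * C) * exp (- B * mu)"
    using la lb mu by (simp add: emeasure_eq_measure)
  then show ?thesis unfolding ev
    by (simp add: B_def C_def kk_def mu_def exp_add[symmetric] exp_diff algebra_simps)
qed


lemma (in prob_space) indep_grp:
  assumes ind: "indep_vars (\<lambda>_. borel) Y I" and AB: "A \<inter> B = {}" "A \<subseteq> I" "B \<subseteq> I"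
    and f: "f \<in> measurable (PiM A (\<lambda>_. borel)) N1" and g: "g \<in> measurable (PiM B (\<lambda>_. borel)) N2"
    and F: "\<And>\<omega>. F \<omega> = f (restrict (\<lambda>i. Y i \<omega>) A)" and G: "\<And>\<omega>. G \<omega> = g (restrict (\<lambda>i. Y i \<omega>) B)"
  shows "indep_var N1 F N2 G"
proof -
  have "F = f \<circ> (\<lambda>\<omega>. restrict (\<lambda>i. Y i \<omega>) A)" "G = g \<circ> (\<lambda>\<omega>. restrict (\<lambda>i. Y i \<omega>) B)"
    by (auto simp: fun_eq_iff F G)
  then show ?thesis using indep_var_compose[OF indep_var_restrict[OF ind AB] f g] by simp
qed

theorem proposition4:
  fixes M :: "'a measure"
    and hr hi xe ye :: "nat \<Rightarrow> 'a \<Rightarrow> real"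
    and x y :: "nat \<Rightarrow> real"
    and \<sigma> \<alpha> \<rho>1 \<rho>2 R0 :: real
  defines "d \<equiv> (\<lambda>k. sqrt ((x k)\<^sup>2 + (y k)\<^sup>2))"
  defines "lam \<equiv> (\<lambda>k. d k powr \<alpha>)"
  defines "\<epsilon>0 \<equiv> 2 powr R0 - 1"
  defines "B \<equiv> \<epsilon>0 / \<rho>2" and "C \<equiv> \<epsilon>0 / \<rho>1" and "kk \<equiv> \<epsilon>0 * \<rho>2 / \<rho>1"
  defines "Pe1 \<equiv> measure M {\<omega> \<in> space M. dhat xe ye 1 \<omega> > dhat xe ye 2 \<omega>}"
  defines "XN \<equiv> (\<lambda>\<omega>. gain hr hi d \<alpha> (nearU xe ye \<omega>) \<omega>)"
  defines "XF \<equiv> (\<lambda>\<omega>. gain hr hi d \<alpha> (farU xe ye \<omega>) \<omega>)"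
  defines "Pcop \<equiv> 1 - measure M {\<omega> \<in> space M.
              \<rho>1 * XN \<omega> / (\<rho>2 * XF \<omega> + 1) > \<epsilon>0 \<and> \<rho>2 * XF \<omega> > \<epsilon>0}"
  assumes "prob_space M"
    and "prob_space.indep_vars M (\<lambda>_. borel) (rvs hr hi xe ye) ({0..<4} \<times> {1, 2})"
    and "\<And>k. k \<in> {1, 2} \<Longrightarrow> distributed M lborel (hr k) (normal_density 0 (sqrt (1/2)))"
    and "\<And>k. k \<in> {1, 2} \<Longrightarrow> distributed M lborel (hi k) (normal_density 0 (sqrt (1/2)))"
    and "\<And>k. k \<in> {1, 2} \<Longrightarrow> distributed M lborel (xe k) (normal_density (x k) \<sigma>)"
    and "\<And>k. k \<in> {1, 2} \<Longrightarrow> distributed M lborel (ye k) (normal_density (y k) \<sigma>)"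
    and "\<sigma> > 0"
    and "0 < d 1" and "d 1 < d 2"
    and "\<alpha> > 0" and "\<rho>1 > 0" and "\<rho>2 > 0" and "R0 > 0"
  shows "Pcop = 1 - (1 - Pe1) * (lam 2 / (lam 2 + kk * lam 1)) * exp (- lam 1 * C - (lam 2 + kk * lam 1) * B)
                  - Pe1 * (lam 1 / (lam 1 + kk * lam 2)) * exp (- lam 2 * C - (lam 1 + kk * lam 2) * B)"
proof -
  interpret prob_space M by (rule \<open>prob_space M\<close>)
  define Y where "Y = rvs hr hi xe ye"
  define I :: "(nat \<times> nat) set" where "I = {0..<4} \<times> {1, 2}"
  have ind: "indep_vars (\<lambda>_. borel) Y I" using \<open>prob_space.indep_vars M (\<lambda>_. borel) (rvs hr hi xe ye) ({0..<4} \<times> {1, 2})\<close> unfolding Y_def I_def .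
  have Y0: "Y (0, k) = hr k" and Y1: "Y (Suc 0, k) = hi k" and Y2: "Y (2, k) = xe k" and Y3: "Y (3, k) = ye k" for k
    by (auto simp: Y_def rvs_def)
  have e0: "0 < \<epsilon>0" unfolding \<epsilon>0_def using \<open>R0 > 0\<close> by simp
  have dhr: "distributed M lborel (hr k) (normal_density 0 (sqrt (1/2)))" if "k \<in> {1, 2}" for k
    using assms(13) that by blast
  have dhi: "distributed M lborel (hi k) (normal_density 0 (sqrt (1/2)))" if "k \<in> {1, 2}" for k
    using assms(14) that by blast
  have dxe: "distributed M lborel (xe k) (normal_density (x k) \<sigma>)" if "k \<in> {1, 2}" for k
    using assms(15) that by blast
  have dye: "distributed M lborel (ye k) (normal_density (y k) \<sigma>)" if "k \<in> {1, 2}" for k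
    using assms(16) that by blast
  have [measurable]: "hr 1 \<in> borel_measurable M" "hr 2 \<in> borel_measurable M"
    "hi 1 \<in> borel_measurable M" "hi 2 \<in> borel_measurable M"
    "xe 1 \<in> borel_measurable M" "xe 2 \<in> borel_measurable M"
    "ye 1 \<in> borel_measurable M" "ye 2 \<in> borel_measurable M"
    using distributed_measurable[OF dhr] distributed_measurable[OF dhi]
      distributed_measurable[OF dxe] distributed_measurable[OF dye] by auto
  have d1: "0 < d 1" and d2: "0 < d 2" using \<open>0 < d 1\<close> \<open>d 1 < d 2\<close> by auto
  have lam1: "0 < lam 1" and lam2: "0 < lam 2" using d1 d2 by (auto simp: lam_def)
  have dX: "distributed M lborel (gain hr hi d \<alpha> k) (exponential_density (lam k))" if k: "k \<in> {1, 2}" for k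
  proof -
    have dk: "0 < d k" using k d1 d2 by auto
    have iv: "indep_var lborel (hr k) lborel (hi k)"
      by (rule indep_grp[OF ind, of "{(0, k)}" "{(1, k)}" "\<lambda>h. h (0, k)" _ "\<lambda>h. h (1, k)"])
         (use k in \<open>auto simp: I_def Y0 Y1\<close>)
    have S: "distributed M lborel (\<lambda>\<omega>. (hr k \<omega>)\<^sup>2 + (hi k \<omega>)\<^sup>2) (exponential_density 1)"
      by (rule chi2[OF iv dhr[OF k] dhi[OF k]])
    have "distributed M lborel (\<lambda>\<omega>. d k powr (-\<alpha>) * ((hr k \<omega>)\<^sup>2 + (hi k \<omega>)\<^sup>2)) (erlang_density 0 (1 / d k powr (-\<alpha>)))"
      by (rule erlang_distributed_mult_const[OF S]) (use dk in auto)
    moreover have "1 / d k powr (-\<alpha>) = lam k" using dk by (simp add: lam_def powr_minus divide_inverse)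
    moreover have "(\<lambda>\<omega>. d k powr (-\<alpha>) * ((hr k \<omega>)\<^sup>2 + (hi k \<omega>)\<^sup>2)) = gain hr hi d \<alpha> k"
      by (auto simp: gain_def fun_eq_iff)
    ultimately show ?thesis by simp
  qed
  define X1 where "X1 = gain hr hi d \<alpha> 1"
  define X2 where "X2 = gain hr hi d \<alpha> 2"
  have dX1: "distributed M lborel X1 (exponential_density (lam 1))" unfolding X1_def by (rule dX) simp
  have dX2: "distributed M lborel X2 (exponential_density (lam 2))" unfolding X2_def by (rule dX) simp
  have [measurable]: "X1 \<in> borel_measurable M" "X2 \<in> borel_measurable M"
    using distributed_measurable[OF dX1] distributed_measurable[OF dX2] by auto
  have i21: "indep_var lborel X2 lborel X1"
    by (rule indep_grp[OF ind, of "{(0, 2), (1, 2)}" "{(0, 1), (1, 1)}"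
          "\<lambda>h. ((h (0, 2))\<^sup>2 + (h (1, 2))\<^sup>2) * d 2 powr (-\<alpha>)" _
          "\<lambda>h. ((h (0, 1))\<^sup>2 + (h (1, 1))\<^sup>2) * d 1 powr (-\<alpha>)"])
       (auto simp: I_def Y0 Y1 X1_def X2_def gain_def)
  have i12: "indep_var lborel X1 lborel X2"
    by (rule indep_grp[OF ind, of "{(0, 1), (1, 1)}" "{(0, 2), (1, 2)}"
          "\<lambda>h. ((h (0, 1))\<^sup>2 + (h (1, 1))\<^sup>2) * d 1 powr (-\<alpha>)" _
          "\<lambda>h. ((h (0, 2))\<^sup>2 + (h (1, 2))\<^sup>2) * d 2 powr (-\<alpha>)"])
       (auto simp: I_def Y0 Y1 X1_def X2_def gain_def)
  have P12: "prob {\<omega> \<in> space M. \<rho>1 * X1 \<omega> / (\<rho>2 * X2 \<omega> + 1) > \<epsilon>0 \<and> \<rho>2 * X2 \<omega> > \<epsilon>0}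
      = lam 2 / (lam 2 + kk * lam 1) * exp (- lam 1 * C - (lam 2 + kk * lam 1) * B)"
    using twoexp[OF i21 dX1 dX2 lam1 lam2 e0 \<open>\<rho>1 > 0\<close> \<open>\<rho>2 > 0\<close>] by (simp add: B_def C_def kk_def)
  have P21: "prob {\<omega> \<in> space M. \<rho>1 * X2 \<omega> / (\<rho>2 * X1 \<omega> + 1) > \<epsilon>0 \<and> \<rho>2 * X1 \<omega> > \<epsilon>0}
      = lam 1 / (lam 1 + kk * lam 2) * exp (- lam 2 * C - (lam 1 + kk * lam 2) * B)"
    using twoexp[OF i12 dX2 dX1 lam2 lam1 e0 \<open>\<rho>1 > 0\<close> \<open>\<rho>2 > 0\<close>] by (simp add: B_def C_def kk_def)
  define Dw where "Dw \<omega> = (dhat xe ye 1 \<omega> \<le> dhat xe ye 2 \<omega>)" for \<omega>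
  have [measurable]: "Dw \<in> measurable M (count_space UNIV)"
    unfolding Dw_def dhat_def by measurable
  define Dp where "Dp \<omega> = (if Dw \<omega> then 1 else 0 :: real, 0 :: real)" for \<omega>
  have iD: "indep_var (borel \<Otimes>\<^sub>M borel) Dp (borel \<Otimes>\<^sub>M borel) (\<lambda>\<omega>. (X1 \<omega>, X2 \<omega>))"
    by (rule indep_grp[OF ind, of "{2, 3} \<times> {1, 2}" "{0, 1} \<times> {1, 2}"
          "\<lambda>h. (if sqrt ((h (2, 1))\<^sup>2 + (h (3, 1))\<^sup>2) \<le> sqrt ((h (2, 2))\<^sup>2 + (h (3, 2))\<^sup>2) then 1 else 0, 0)" _
          "\<lambda>h. (((h (0, 1))\<^sup>2 + (h (1, 1))\<^sup>2) * d 1 powr (-\<alpha>), ((h (0, 2))\<^sup>2 + (h (1, 2))\<^sup>2) * d 2 powr (-\<alpha>))"])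
       (auto simp: I_def Y0 Y1 Y2 Y3 X1_def X2_def gain_def Dp_def Dw_def dhat_def)
  define T1 where "T1 = {p :: real \<times> real. fst p = 1}"
  define T0 where "T0 = {p :: real \<times> real. fst p = 0}"
  define S12 where "S12 = {p :: real \<times> real. \<rho>1 * fst p / (\<rho>2 * snd p + 1) > \<epsilon>0 \<and> \<rho>2 * snd p > \<epsilon>0}"
  define S21 where "S21 = {p :: real \<times> real. \<rho>1 * snd p / (\<rho>2 * fst p + 1) > \<epsilon>0 \<and> \<rho>2 * fst p > \<epsilon>0}"
  have sets_eq: "Q \<in> sets (borel \<Otimes>\<^sub>M borel)" if "Q = {p \<in> space (borel \<Otimes>\<^sub>M borel). P p}" "Measurable.pred (borel \<Otimes>\<^sub>M borel) P" for Q P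
    using that by simp
  have T1s: "T1 \<in> sets (borel \<Otimes>\<^sub>M borel)" by (rule sets_eq[of _ "\<lambda>p. fst p = 1"]) (auto simp: T1_def space_pair_measure)
  have T0s: "T0 \<in> sets (borel \<Otimes>\<^sub>M borel)" by (rule sets_eq[of _ "\<lambda>p. fst p = 0"]) (auto simp: T0_def space_pair_measure)
  have S12s: "S12 \<in> sets (borel \<Otimes>\<^sub>M borel)"
    by (rule sets_eq[of _ "\<lambda>p. \<rho>1 * fst p / (\<rho>2 * snd p + 1) > \<epsilon>0 \<and> \<rho>2 * snd p > \<epsilon>0"]) (auto simp: S12_def space_pair_measure)
  have S21s: "S21 \<in> sets (borel \<Otimes>\<^sub>M borel)"
    by (rule sets_eq[of _ "\<lambda>p. \<rho>1 * snd p / (\<rho>2 * fst p + 1) > \<epsilon>0 \<and> \<rho>2 * fst p > \<epsilon>0"]) (auto simp: S21_def space_pair_measure)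
  define E1 where "E1 = {\<omega> \<in> space M. Dw \<omega> \<and> (\<rho>1 * X1 \<omega> / (\<rho>2 * X2 \<omega> + 1) > \<epsilon>0 \<and> \<rho>2 * X2 \<omega> > \<epsilon>0)}"
  define E2 where "E2 = {\<omega> \<in> space M. \<not> Dw \<omega> \<and> (\<rho>1 * X2 \<omega> / (\<rho>2 * X1 \<omega> + 1) > \<epsilon>0 \<and> \<rho>2 * X1 \<omega> > \<epsilon>0)}"
  have E1s: "E1 \<in> events" unfolding E1_def by measurable
  have E2s: "E2 \<in> events" unfolding E2_def by measurable
  have Eeq: "{\<omega> \<in> space M. \<rho>1 * XN \<omega> / (\<rho>2 * XF \<omega> + 1) > \<epsilon>0 \<and> \<rho>2 * XF \<omega> > \<epsilon>0} = E1 \<union> E2"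
    by (auto simp: E1_def E2_def XN_def XF_def nearU_def farU_def Dw_def X1_def X2_def)
  have "prob (E1 \<union> E2) = prob E1 + prob E2"
    by (rule finite_measure_Union[OF E1s E2s]) (auto simp: E1_def E2_def)
  have pD: "prob {\<omega> \<in> space M. Dw \<omega>} = 1 - Pe1"
  proof -
    have "{\<omega> \<in> space M. dhat xe ye 1 \<omega> > dhat xe ye 2 \<omega>} = space M - {\<omega> \<in> space M. Dw \<omega>}"
      by (auto simp: Dw_def)
    moreover have "{\<omega> \<in> space M. Dw \<omega>} \<in> events" by measurable
    ultimately have "Pe1 = 1 - prob {\<omega> \<in> space M. Dw \<omega>}" unfolding Pe1_def by (simp add: prob_compl)
    then show ?thesis by simp
  qed
  have pnD: "prob {\<omega> \<in> space M. \<not> Dw \<omega>} = Pe1"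
    unfolding Pe1_def by (intro arg_cong[where f=prob]) (auto simp: Dw_def)
  have pE1: "prob E1 = (1 - Pe1) * prob {\<omega> \<in> space M. \<rho>1 * X1 \<omega> / (\<rho>2 * X2 \<omega> + 1) > \<epsilon>0 \<and> \<rho>2 * X2 \<omega> > \<epsilon>0}"
  proof -
    have "E1 = (\<lambda>x. (Dp x, (X1 x, X2 x))) -` (T1 \<times> S12) \<inter> space M"
      by (auto simp: E1_def Dp_def T1_def S12_def split: if_splits)
    then have "prob E1 = prob (Dp -` T1 \<inter> space M) * prob ((\<lambda>x. (X1 x, X2 x)) -` S12 \<inter> space M)"
      using indep_varD[OF iD T1s S12s] by simp
    also have "Dp -` T1 \<inter> space M = {\<omega> \<in> space M. Dw \<omega>}" by (auto simp: Dp_def T1_def split: if_splits)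
    also have "(\<lambda>x. (X1 x, X2 x)) -` S12 \<inter> space M = {\<omega> \<in> space M. \<rho>1 * X1 \<omega> / (\<rho>2 * X2 \<omega> + 1) > \<epsilon>0 \<and> \<rho>2 * X2 \<omega> > \<epsilon>0}"
      by (auto simp: S12_def)
    finally show ?thesis using pD by simp
  qed
  have pE2: "prob E2 = Pe1 * prob {\<omega> \<in> space M. \<rho>1 * X2 \<omega> / (\<rho>2 * X1 \<omega> + 1) > \<epsilon>0 \<and> \<rho>2 * X1 \<omega> > \<epsilon>0}"
  proof -
    have "E2 = (\<lambda>x. (Dp x, (X1 x, X2 x))) -` (T0 \<times> S21) \<inter> space M"
      by (auto simp: E2_def Dp_def T0_def S21_def split: if_splits)
    then have "prob E2 = prob (Dp -` T0 \<inter> space M) * prob ((\<lambda>x. (X1 x, X2 x)) -` S21 \<inter> space M)"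
      using indep_varD[OF iD T0s S21s] by simp
    also have "Dp -` T0 \<inter> space M = {\<omega> \<in> space M. \<not> Dw \<omega>}" by (auto simp: Dp_def T0_def split: if_splits)
    also have "(\<lambda>x. (X1 x, X2 x)) -` S21 \<inter> space M = {\<omega> \<in> space M. \<rho>1 * X2 \<omega> / (\<rho>2 * X1 \<omega> + 1) > \<epsilon>0 \<and> \<rho>2 * X1 \<omega> > \<epsilon>0}"
      by (auto simp: S21_def)
    finally show ?thesis using pnD by simp
  qed
  show ?thesis
    unfolding Pcop_def Eeq \<open>prob (E1 \<union> E2) = prob E1 + prob E2\<close> pE1 pE2 P12 P21
    by (simp add: algebra_simps)
qed

end
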